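(* Let $Y,Z$ be complex Banach spaces, let $\mathcal B$ be a collection of non-empty subsets of $Y$, and let $I\subseteq\mathbb R^n$ be admissible with respect to the almost periodic extensions. Suppose $F:I\to Y$ is uniformly continuous and Bohr almost periodic, and $G:I\times Y\to Z$ is Bohr $\mathcal B$-almost periodic with $\overline{R(F)}=B\in\mathcal B$, where $R(F)$ is the range of $F$. If $G$ is uniformly continuous on $I\times B$, then $W:I\to Z$, $W(\mathbf t):=G(\mathbf t;F(\mathbf t))$, is uniformly continuous and Bohr almost periodic.
   Context: $\emptyset\ne I\subseteq\mathbb R^n$ with $I+I\subseteq I$ is admissible with respect to the almost periodic extensions if for every complex Banach space $V$ and every uniformly continuous Bohr almost periodic $H:I\to V$ there exists a unique Bohr almost periodic $\tilde H:\mathbb R^n\to V$ with $\tilde H=H$ on $I$. A continuous $H:I\to V$ is Bohr almost periodic if for every $\epsilon>0$ there is $l>0$ such that for each $\mathbf t_0\in I$ there is $\tau\in I$ with $|\tau-\mathbf t_0|\le l$ and $\|H(\mathbf t+\tau)-H(\mathbf t)\|\le\epsilon$ for all $\mathbf t\in I$. A continuous $G:I\times Y\to Z$ is Bohr $\mathcal B$-almost periodic if for every $B\in\mathcal B$ and $\epsilon>0$ there is $l>0$ such that for each $\mathbf t_0\in I$ there is $\tau\in I$ with $|\tau-\mathbf t_0|\le l$ and $\|G(\mathbf t+\tau;y)-G(\mathbf t;y)\|_Z\le\epsilon$ for all $\mathbf t\in I$, $y\in B$. *)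

theory Defs
  imports "HOL-Analysis.Analysis"
begin

instance bcontfun :: (metric_space, banach) banach ..

definition bohr_ap_on :: "(real^'n) set \<Rightarrow> (real^'n \<Rightarrow> 'v::real_normed_vector) \<Rightarrow> bool" where
  "bohr_ap_on I H \<longleftrightarrow> continuous_on I H \<and>
     (\<forall>\<epsilon>>0. \<exists>l>0. \<forall>t0\<in>I. \<exists>\<tau>\<in>I. norm (\<tau> - t0) \<le> l \<and>
        (\<forall>t\<in>I. norm (H (t + \<tau>) - H t) \<le> \<epsilon>))"

definition bohr_B_ap_on :: "(real^'n) set \<Rightarrow> 'y set set \<Rightarrow> ((real^'n) \<times> 'y::real_normed_vector \<Rightarrow> 'z::real_normed_vector) \<Rightarrow> bool" where
  "bohr_B_ap_on I BB G \<longleftrightarrow> continuous_on (I \<times> UNIV) G \<and>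
     (\<forall>B\<in>BB. \<forall>\<epsilon>>0. \<exists>l>0. \<forall>t0\<in>I. \<exists>\<tau>\<in>I. norm (\<tau> - t0) \<le> l \<and>
        (\<forall>t\<in>I. \<forall>y\<in>B. norm (G (t + \<tau>, y) - G (t, y)) \<le> \<epsilon>))"

definition ap_admissible_for :: "'v::banach itself \<Rightarrow> (real^'n) set \<Rightarrow> bool" where
  "ap_admissible_for _ I \<longleftrightarrow> I \<noteq> {} \<and> (\<forall>x\<in>I. \<forall>y\<in>I. x + y \<in> I) \<and>
     (\<forall>H :: real^'n \<Rightarrow> 'v. uniformly_continuous_on I H \<and> bohr_ap_on I H \<longrightarrow>
        (\<exists>!Ht. bohr_ap_on UNIV Ht \<and> (\<forall>t\<in>I. Ht t = H t)))"

end

theory Submission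
  imports Defs
begin

definition dfc :: "(real^'n \<Rightarrow> 'v::real_normed_vector) \<Rightarrow> real^'n \<Rightarrow> real" where
  "dfc f x = (SUP u. min 1 (norm (f (u + x) - f u)))"

definition gd :: "(real^'n \<Rightarrow> real) \<Rightarrow> bool" where
  "gd p \<longleftrightarrow> p 0 = 0 \<and> (\<forall>x. 0 \<le> p x) \<and> (\<forall>x. p (-x) = p x) \<and> (\<forall>x y. p (x+y) \<le> p x + p y)
     \<and> (\<forall>\<eta>>0. \<exists>\<delta>>0. \<forall>x. norm x < \<delta> \<longrightarrow> p x \<le> \<eta>)
     \<and> (\<forall>\<eta>>0. \<exists>l>0. \<forall>t0. \<exists>\<tau>. norm (\<tau> - t0) \<le> l \<and> p \<tau> \<le> \<eta>)"

lemma dfc_upper: "min 1 (norm (f (u + x) - f u)) \<le> dfc f x"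
  unfolding dfc_def by (rule cSUP_upper) (auto intro: bdd_aboveI[where M=1])

lemma dfc_least: "(\<And>u. min 1 (norm (f (u + x) - f u)) \<le> c) \<Longrightarrow> dfc f x \<le> c"
  unfolding dfc_def by (rule cSUP_least) auto

lemma dfc_nonneg: "0 \<le> dfc f x"
  using dfc_upper[of f 0 x] by (smt (verit) norm_ge_zero)

lemma dfc_zero: "dfc f 0 = 0"
  using dfc_least[of f 0 0] dfc_nonneg[of f 0] by simp

lemma dfc_neg_le: "dfc f (-x) \<le> dfc f x"
proof (rule dfc_least)
  fix u
  have "norm (f (u + - x) - f u) = norm (f ((u - x) + x) - f (u - x))"
    by (simp add: norm_minus_commute)
  then show "min 1 (norm (f (u + - x) - f u)) \<le> dfc f x"
    using dfc_upper[of f "u - x" x] by simp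
qed

lemma dfc_neg: "dfc f (-x) = dfc f x"
  using dfc_neg_le[of f x] dfc_neg_le[of f "-x"] by simp

lemma min1_add: "0 \<le> a \<Longrightarrow> 0 \<le> b \<Longrightarrow> c \<le> a + b \<Longrightarrow> min 1 c \<le> min 1 a + min 1 (b::real)"
  by linarith

lemma dfc_add: "dfc f (x + y) \<le> dfc f x + dfc f y"
proof (rule dfc_least)
  fix u
  have "f (u + (x + y)) - f u = (f ((u + x) + y) - f (u + x)) + (f (u + x) - f u)"
    by (simp add: algebra_simps)
  then have "norm (f (u + (x + y)) - f u) \<le> norm (f ((u + x) + y) - f (u + x)) + norm (f (u + x) - f u)"
    by (metis norm_triangle_ineq)
  then have "min 1 (norm (f (u + (x + y)) - f u)) \<le> min 1 (norm (f ((u + x) + y) - f (u + x))) + min 1 (norm (f (u + x) - f u))"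
    by (intro min1_add) auto
  also have "\<dots> \<le> dfc f y + dfc f x"
    by (intro add_mono dfc_upper)
  finally show "min 1 (norm (f (u + (x + y)) - f u)) \<le> dfc f x + dfc f y" by simp
qed

lemma dfc_small: "dfc f x \<le> \<eta> \<Longrightarrow> \<eta> < 1 \<Longrightarrow> norm (f (u + x) - f u) \<le> \<eta>"
  using dfc_upper[of f u x] by linarith

lemma norm3: "norm (a + b + c) \<le> norm a + norm b + norm (c::'a::real_normed_vector)"
  using norm_triangle_ineq[of "a+b" c] norm_triangle_ineq[of a b] by linarith

lemma norm4: "norm (a + b + c + d) \<le> norm a + norm b + norm c + norm (d::'a::real_normed_vector)"
  using norm_triangle_ineq[of "a+b+c" d] norm3[of a b c] by linarith

lemma ap_univ_uc:
  fixes f :: "real^'n \<Rightarrow> 'v::real_normed_vector"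
  assumes ap: "bohr_ap_on UNIV f" and eta: "\<eta> > 0"
  shows "\<exists>\<delta>>0. \<forall>u x. norm x < \<delta> \<longrightarrow> norm (f (u + x) - f u) \<le> \<eta>"
proof -
  have cont: "continuous_on UNIV f" and per: "\<forall>\<epsilon>>0. \<exists>l>0. \<forall>t0. \<exists>\<tau>. norm (\<tau> - t0) \<le> l \<and> (\<forall>t. norm (f (t+\<tau>) - f t) \<le> \<epsilon>)"
    using ap unfolding bohr_ap_on_def by auto
  obtain l where l: "l > 0" "\<forall>t0. \<exists>\<tau>. norm (\<tau> - t0) \<le> l \<and> (\<forall>t. norm (f (t+\<tau>) - f t) \<le> \<eta>/3)"
    using per eta by (metis divide_pos_pos zero_less_numeral)
  have "uniformly_continuous_on (cball 0 (l+1)) f"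
    by (rule compact_uniformly_continuous) (auto intro: continuous_on_subset[OF cont])
  then obtain d where d: "d > 0" "\<forall>x\<in>cball 0 (l+1). \<forall>x'\<in>cball 0 (l+1). dist x' x < d \<longrightarrow> dist (f x') (f x) < \<eta>/3"
    unfolding uniformly_continuous_on_def using eta by (metis divide_pos_pos zero_less_numeral)
  show ?thesis
  proof (intro exI[of _ "min d 1"] conjI allI impI)
    show "min d 1 > 0" using d by simp
    fix u x :: "real^'n" assume x: "norm x < min d 1"
    obtain \<tau> where \<tau>: "norm (\<tau> - (-u)) \<le> l" "\<forall>t. norm (f (t+\<tau>) - f t) \<le> \<eta>/3"
      using l by blast
    have n1: "norm (u + \<tau>) \<le> l" using \<tau>(1) by (simp add: add.commute)
    have n2: "norm (u + x + \<tau>) \<le> l + 1"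
    proof -
      have "norm (u + x + \<tau>) \<le> norm (u + \<tau>) + norm x"
        by (metis add.commute add.left_commute norm_triangle_ineq)
      then show ?thesis using n1 x by simp
    qed
    have "dist (u + x + \<tau>) (u + \<tau>) < d" using x by (simp add: dist_norm)
    then have m: "norm (f (u + x + \<tau>) - f (u + \<tau>)) < \<eta>/3"
    proof -
      have "u+\<tau> \<in> cball 0 (l+1)" "u+x+\<tau> \<in> cball 0 (l+1)" using n1 n2 by (simp_all add: mem_cball_0)
      then show ?thesis using d(2) \<open>dist (u + x + \<tau>) (u + \<tau>) < d\<close> by (metis dist_norm)
    qed
    have "norm (f (u + x) - f u) \<le> norm (f (u + x) - f (u + x + \<tau>)) + norm (f (u + x + \<tau>) - f (u + \<tau>)) + norm (f (u + \<tau>) - f u)"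
      using norm3[of "f (u + x) - f (u + x + \<tau>)" "f (u + x + \<tau>) - f (u + \<tau>)" "f (u + \<tau>) - f u"] by simp
    moreover have "norm (f (u + x) - f (u + x + \<tau>)) \<le> \<eta>/3"
      using \<tau>(2)[rule_format, of "u+x"] by (metis norm_minus_commute)
    moreover have "norm (f (u + \<tau>) - f u) \<le> \<eta>/3"
      using \<tau>(2)[rule_format, of u] by simp
    ultimately show "norm (f (u + x) - f u) \<le> \<eta>"
      using m by linarith
  qed
qed

lemma dfc_gd:
  fixes f :: "real^'n \<Rightarrow> 'v::real_normed_vector"
  assumes ap: "bohr_ap_on UNIV f"
  shows "gd (dfc f)"
  unfolding gd_def
proof (intro conjI allI impI)
  show "dfc f 0 = 0" by (rule dfc_zero)
  show "0 \<le> dfc f x" for x by (rule dfc_nonneg)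
  show "dfc f (-x) = dfc f x" for x by (rule dfc_neg)
  show "dfc f (x + y) \<le> dfc f x + dfc f y" for x y by (rule dfc_add)
  fix \<eta> :: real assume eta: "\<eta> > 0"
  obtain \<delta> where d: "\<delta> > 0" "\<forall>u x. norm x < \<delta> \<longrightarrow> norm (f (u + x) - f u) \<le> \<eta>"
    using ap_univ_uc[OF ap eta] by blast
  show "\<exists>\<delta>>0. \<forall>x. norm x < \<delta> \<longrightarrow> dfc f x \<le> \<eta>"
  proof (intro exI[of _ \<delta>] conjI allI impI)
    fix x :: "real^'n" assume x: "norm x < \<delta>"
    show "dfc f x \<le> \<eta>"
    proof (rule dfc_least)
      fix u
      have "norm (f (u + x) - f u) \<le> \<eta>" using d(2) x by blast
      then show "min 1 (norm (f (u + x) - f u)) \<le> \<eta>" by (simp add: min_def)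
    qed
  qed (rule d(1))
  obtain l where l: "l > 0" "\<forall>t0. \<exists>\<tau>. norm (\<tau> - t0) \<le> l \<and> (\<forall>t. norm (f (t+\<tau>) - f t) \<le> \<eta>)"
    using ap eta unfolding bohr_ap_on_def by auto
  show "\<exists>l>0. \<forall>t0. \<exists>\<tau>. norm (\<tau> - t0) \<le> l \<and> dfc f \<tau> \<le> \<eta>"
  proof (intro exI[of _ l] conjI allI)
    fix t0 :: "real^'n"
    obtain \<tau> where t: "norm (\<tau> - t0) \<le> l" "\<forall>t. norm (f (t+\<tau>) - f t) \<le> \<eta>" using l by blast
    have "dfc f \<tau> \<le> \<eta>"
    proof (rule dfc_least)
      fix u
      have "norm (f (u + \<tau>) - f u) \<le> \<eta>" using t(2) by blast
      then show "min 1 (norm (f (u + \<tau>) - f u)) \<le> \<eta>" by (simp add: min_def)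
    qed
    then show "\<exists>\<tau>. norm (\<tau> - t0) \<le> l \<and> dfc f \<tau> \<le> \<eta>" using t(1) by blast
  qed (rule l(1))
qed

lemma gd_diff: "gd p \<Longrightarrow> \<bar>p a - p b\<bar> \<le> p (a - b)"
proof -
  assume g: "gd p"
  have 1: "p a \<le> p (a - b) + p b" using g unfolding gd_def by (metis diff_add_cancel)
  have 2: "p b \<le> p (b - a) + p a" using g unfolding gd_def by (metis diff_add_cancel)
  have 3: "p (b - a) = p (a - b)" using g unfolding gd_def by (metis minus_diff_eq)
  show ?thesis using 1 2 3 by linarith
qed

lemma gd_D:
  fixes p :: "real^'n \<Rightarrow> real"
  assumes "gd p"
  shows "p 0 = 0" "0 \<le> p x" "p (-x) = p x" "p (x+y) \<le> p x + p y"
    "\<eta>>0 \<Longrightarrow> \<exists>\<delta>>0. \<forall>x. norm x < \<delta> \<longrightarrow> p x \<le> \<eta>"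
    "\<eta>>0 \<Longrightarrow> \<exists>l>0. \<forall>t0. \<exists>\<tau>. norm (\<tau> - t0) \<le> l \<and> p \<tau> \<le> \<eta>"
  using assms unfolding gd_def by auto

lemma gd_ucont:
  fixes p :: "real^'n \<Rightarrow> real"
  assumes "gd p"
  shows "uniformly_continuous_on UNIV p"
  unfolding uniformly_continuous_on_def
proof (intro allI impI)
  fix e :: real assume e: "e > 0"
  obtain d where d: "d > 0" "\<forall>x. norm x < d \<longrightarrow> p x \<le> e/2"
    using gd_D(5)[OF assms, of "e/2"] e by auto
  show "\<exists>d>0. \<forall>x\<in>UNIV. \<forall>x'\<in>UNIV. dist x' x < d \<longrightarrow> dist (p x') (p x) < e"
  proof (intro exI[of _ d] conjI ballI impI)
    fix x x' :: "real^'n" assume "dist x' x < d"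
    then have "p (x' - x) \<le> e/2" using d by (simp add: dist_norm)
    then show "dist (p x') (p x) < e" using gd_diff[OF assms, of x' x] e by (simp add: dist_real_def)
  qed (rule d(1))
qed

lemma gd_zero: "gd (\<lambda>x. 0)"
  unfolding gd_def
proof (intro conjI allI impI)
  fix \<eta> :: real assume "\<eta> > 0"
  then show "\<exists>\<delta>>0. \<forall>x::real^'n. norm x < \<delta> \<longrightarrow> (0::real) \<le> \<eta>" by auto
  have "\<forall>t0::real^'n. norm (t0 - t0) \<le> 1 \<and> (0::real) \<le> \<eta>" using \<open>\<eta> > 0\<close> by simp
  then show "\<exists>l>0. \<forall>t0::real^'n. \<exists>\<tau>. norm (\<tau> - t0) \<le> l \<and> (0::real) \<le> \<eta>"
    using zero_less_one by blast
qed auto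

lemma gd_add:
  fixes p q :: "real^'n \<Rightarrow> real"
  assumes P: "gd p" and Q: "gd q"
  shows "gd (\<lambda>x. p x + q x)"
proof -
  have rd: "\<exists>L>0. \<forall>t0. \<exists>\<tau>. norm (\<tau> - t0) \<le> L \<and> p \<tau> + q \<tau> \<le> \<eta>" if eta: "\<eta> > 0" for \<eta>
  proof -
    define e where "e = \<eta>/5"
    have e: "e > 0" using eta by (simp add: e_def)
    obtain l1 where l1: "l1 > 0" "\<forall>t0. \<exists>\<tau>. norm (\<tau> - t0) \<le> l1 \<and> p \<tau> \<le> e"
      using gd_D(6)[OF P e] by blast
    obtain l2 where l2: "l2 > 0" "\<forall>t0. \<exists>\<tau>. norm (\<tau> - t0) \<le> l2 \<and> q \<tau> \<le> e"
      using gd_D(6)[OF Q e] by blast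
    obtain \<delta> where dl: "\<delta> > 0" "\<forall>x. norm x < \<delta> \<longrightarrow> q x \<le> e"
      using gd_D(5)[OF Q e] by blast
    obtain a where a: "\<And>t. norm (a t - t) \<le> l1 \<and> p (a t) \<le> e"
      using l1(2) by metis
    obtain b where b: "\<And>t. norm (b t - t) \<le> l2 \<and> q (b t) \<le> e"
      using l2(2) by metis
    define d where "d t = a t - b t" for t
    have "norm (d t) \<le> l1 + l2" for t
    proof -
      have "d t = (a t - t) - (b t - t)" by (simp add: d_def)
      then have "norm (d t) \<le> norm (a t - t) + norm (b t - t)" using norm_triangle_ineq4[of "a t - t" "b t - t"] by simp
      then show ?thesis using a[of t] b[of t] by linarith
    qed
    then have "bounded (range d)" unfolding bounded_iff by blast
    then have cpt: "compact (closure (range d))" by simp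
    have cov: "closure (range d) \<subseteq> (\<Union>t\<in>UNIV. ball (d t) \<delta>)"
    proof
      fix z assume "z \<in> closure (range d)"
      then have "\<exists>y\<in>range d. dist y z < \<delta>" using closure_approachable[of z "range d"] dl(1) by simp
      then obtain t where "dist (d t) z < \<delta>" by blast
      then show "z \<in> (\<Union>t\<in>UNIV. ball (d t) \<delta>)" by auto
    qed
    obtain T0 where T0: "finite T0" "closure (range d) \<subseteq> (\<Union>t\<in>T0. ball (d t) \<delta>)"
      by (rule compactE_image[OF cpt _ cov]) (simp, blast)
    define M where "M = (\<Sum>t\<in>T0. norm (a t))"
    have M: "norm (a t) \<le> M" if "t \<in> T0" for t
      unfolding M_def using T0(1) that by (intro member_le_sum) auto
    have M0: "0 \<le> M" unfolding M_def by (simp add: sum_nonneg)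
    show ?thesis
    proof (intro exI[of _ "l1 + M + 1"] conjI allI)
      show "l1 + M + 1 > 0" using l1 M0 by simp
      fix t0
      have "d t0 \<in> closure (range d)" using closure_subset[of "range d"] by auto
      then have "d t0 \<in> (\<Union>t\<in>T0. ball (d t) \<delta>)" using T0(2) by (rule subsetD[rotated])
      then obtain t' where t'0: "t' \<in> T0" "d t0 \<in> ball (d t') \<delta>" by (rule UN_E)
      then have t': "t' \<in> T0" "dist (d t') (d t0) < \<delta>" by simp_all
      define \<tau> where "\<tau> = a t0 - a t'"
      have eqn: "\<tau> - t0 = (a t0 - t0) - a t'" by (simp add: \<tau>_def)
      have "norm (\<tau> - t0) \<le> norm (a t0 - t0) + norm (a t')" unfolding eqn by (rule norm_triangle_ineq4)
      then have n: "norm (\<tau> - t0) \<le> l1 + M + 1" using a[of t0] M[OF t'(1)] by linarith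
      have "p \<tau> \<le> p (a t0) + p (- a t')" unfolding \<tau>_def diff_conv_add_uminus by (rule gd_D(4)[OF P])
      then have pt: "p \<tau> \<le> 2*e" using a[of t0] a[of t'] gd_D(3)[OF P, of "a t'"] by linarith
      have teq: "\<tau> = (b t0 + - b t') + (d t0 - d t')" by (simp add: \<tau>_def d_def algebra_simps)
      have q1: "q \<tau> \<le> q (b t0 + - b t') + q (d t0 - d t')" unfolding teq by (rule gd_D(4)[OF Q])
      have q2: "q (b t0 + - b t') \<le> q (b t0) + q (- b t')" by (rule gd_D(4)[OF Q])
      have "norm (d t0 - d t') < \<delta>" using t'(2) by (metis dist_norm dist_commute)
      then have q3: "q (d t0 - d t') \<le> e" using dl(2) by blast
      have qt: "q \<tau> \<le> 3*e" using q1 q2 q3 b[of t0] b[of t'] gd_D(3)[OF Q, of "b t'"] by linarith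
      show "\<exists>\<tau>. norm (\<tau> - t0) \<le> l1 + M + 1 \<and> p \<tau> + q \<tau> \<le> \<eta>"
        using n pt qt e_def by (intro exI[of _ \<tau>]) auto
    qed
  qed
  show ?thesis
    unfolding gd_def
  proof (intro conjI allI impI)
    show "p 0 + q 0 = 0" using gd_D(1)[OF P] gd_D(1)[OF Q] by simp
    show "0 \<le> p x + q x" for x using gd_D(2)[OF P] gd_D(2)[OF Q] by (simp add: add_nonneg_nonneg)
    show "p (-x) + q (-x) = p x + q x" for x using gd_D(3)[OF P] gd_D(3)[OF Q] by simp
    show "p (x+y) + q (x+y) \<le> p x + q x + (p y + q y)" for x y
      using gd_D(4)[OF P, of x y] gd_D(4)[OF Q, of x y] by linarith
    fix \<eta> :: real assume eta: "\<eta> > 0"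
    obtain d1 where d1: "d1 > 0" "\<forall>x. norm x < d1 \<longrightarrow> p x \<le> \<eta>/2" using gd_D(5)[OF P, of "\<eta>/2"] eta by auto
    obtain d2 where d2: "d2 > 0" "\<forall>x. norm x < d2 \<longrightarrow> q x \<le> \<eta>/2" using gd_D(5)[OF Q, of "\<eta>/2"] eta by auto
    show "\<exists>\<delta>>0. \<forall>x. norm x < \<delta> \<longrightarrow> p x + q x \<le> \<eta>"
    proof (intro exI[of _ "min d1 d2"] conjI allI impI)
      fix x :: "real^'n" assume "norm x < min d1 d2"
      then have "p x \<le> \<eta>/2" "q x \<le> \<eta>/2" using d1 d2 by auto
      then show "p x + q x \<le> \<eta>" by linarith
    qed (use d1 d2 in auto)
    show "\<exists>l>0. \<forall>t0. \<exists>\<tau>. norm (\<tau> - t0) \<le> l \<and> p \<tau> + q \<tau> \<le> \<eta>" by (rule rd[OF eta])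
  qed
qed

lemma gd_sum:
  fixes P :: "'i \<Rightarrow> real^'n \<Rightarrow> real"
  assumes "finite S" "\<forall>i\<in>S. gd (P i)"
  shows "gd (\<lambda>x. \<Sum>i\<in>S. P i x)"
  using assms
proof (induction S rule: finite_induct)
  case empty
  then show ?case using gd_zero by simp
next
  case (insert i S)
  have "gd (\<lambda>x. P i x + (\<Sum>i\<in>S. P i x))"
    using insert by (intro gd_add) auto
  then show ?case using insert by simp
qed

lemma uc_subset: "uniformly_continuous_on S (f::'a::metric_space \<Rightarrow> 'b::metric_space) \<Longrightarrow> T \<subseteq> S \<Longrightarrow> uniformly_continuous_on T f"
  unfolding uniformly_continuous_on_def by (meson subsetD)

lemma bohr_ap_const: "bohr_ap_on S (\<lambda>_. c)"
  unfolding bohr_ap_on_def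
proof (intro conjI allI impI)
  show "continuous_on S (\<lambda>_. c)" by simp
  fix \<epsilon> :: real assume "\<epsilon> > 0"
  have "\<forall>t0\<in>S. norm (t0 - t0) \<le> 1 \<and> (\<forall>t\<in>S. norm (c - c) \<le> \<epsilon>)" using \<open>\<epsilon> > 0\<close> by simp
  then show "\<exists>l>0. \<forall>t0\<in>S. \<exists>\<tau>\<in>S. norm (\<tau> - t0) \<le> l \<and> (\<forall>t\<in>S. norm (c - c) \<le> \<epsilon>)"
    using zero_less_one by blast
qed

lemma adm_unique_real:
  fixes I :: "(real^'n) set" and v :: "'z::banach" and g :: "real^'n \<Rightarrow> real"
  assumes adm: "ap_admissible_for TYPE('z) I" and v: "v \<noteq> 0"
    and g: "bohr_ap_on UNIV g" and z: "\<forall>t\<in>I. g t = 0"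
  shows "g t = 0"
proof -
  have uc0: "uniformly_continuous_on I (\<lambda>_::real^'n. 0::'z)" by (rule uniformly_continuous_on_const)
  have ex1: "\<exists>!Ht. bohr_ap_on UNIV Ht \<and> (\<forall>t\<in>I. Ht t = (0::'z))"
    using adm uc0 bohr_ap_const[of I "0::'z"] unfolding ap_admissible_for_def by blast
  define \<phi> where "\<phi> s = g s *\<^sub>R v" for s
  have gc: "continuous_on UNIV g" and gp: "\<forall>\<epsilon>>0. \<exists>l>0. \<forall>t0. \<exists>\<tau>. norm (\<tau> - t0) \<le> l \<and> (\<forall>t. norm (g (t+\<tau>) - g t) \<le> \<epsilon>)"
    using g unfolding bohr_ap_on_def by auto
  have ap\<phi>: "bohr_ap_on UNIV \<phi>"
    unfolding bohr_ap_on_def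
  proof (intro conjI allI impI)
    show "continuous_on UNIV \<phi>" unfolding \<phi>_def by (intro continuous_intros gc)
    fix \<epsilon> :: real assume e: "\<epsilon> > 0"
    then have "\<epsilon> / norm v > 0" using v by simp
    then obtain l where l: "l > 0" "\<forall>t0. \<exists>\<tau>. norm (\<tau> - t0) \<le> l \<and> (\<forall>t. norm (g (t+\<tau>) - g t) \<le> \<epsilon> / norm v)"
      using gp by blast
    have "\<forall>t0\<in>UNIV. \<exists>\<tau>\<in>UNIV. norm (\<tau> - t0) \<le> l \<and> (\<forall>t\<in>UNIV. norm (\<phi> (t + \<tau>) - \<phi> t) \<le> \<epsilon>)"
    proof
      fix t0 :: "real^'n"
      obtain \<tau> where t: "norm (\<tau> - t0) \<le> l" "\<forall>t. norm (g (t+\<tau>) - g t) \<le> \<epsilon> / norm v"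
        using l(2) by blast
      have "norm (\<phi> (t + \<tau>) - \<phi> t) \<le> \<epsilon>" for t
      proof -
        have "norm (\<phi> (t + \<tau>) - \<phi> t) = norm (g (t+\<tau>) - g t) * norm v"
          unfolding \<phi>_def by (simp add: scaleR_diff_left[symmetric])
        also have "\<dots> \<le> (\<epsilon> / norm v) * norm v"
          using t(2) by (intro mult_right_mono) auto
        also have "\<dots> = \<epsilon>" using v by simp
        finally show ?thesis .
      qed
      then show "\<exists>\<tau>\<in>UNIV. norm (\<tau> - t0) \<le> l \<and> (\<forall>t\<in>UNIV. norm (\<phi> (t + \<tau>) - \<phi> t) \<le> \<epsilon>)"
        using t(1) by blast
    qed
    then show "\<exists>l>0. \<forall>t0\<in>UNIV. \<exists>\<tau>\<in>UNIV. norm (\<tau> - t0) \<le> l \<and> (\<forall>t\<in>UNIV. norm (\<phi> (t + \<tau>) - \<phi> t) \<le> \<epsilon>)"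
      using l(1) by blast
  qed
  have "\<forall>t\<in>I. \<phi> t = 0" using z unfolding \<phi>_def by simp
  then have "\<phi> = (\<lambda>_. 0)" using ex1 ap\<phi> bohr_ap_const[of UNIV "0::'z"] by blast
  then have "g t *\<^sub>R v = 0" unfolding \<phi>_def by meson
  then show ?thesis using v by simp
qed

lemma min_lip: "\<bar>min a c - min b c\<bar> \<le> \<bar>a - (b::real)\<bar>"
  by (simp add: min_def abs_if)

lemma gd_density:
  fixes h :: "real^'n \<Rightarrow> real" and I :: "(real^'n) set"
  assumes U: "\<forall>g::real^'n \<Rightarrow> real. bohr_ap_on UNIV g \<and> (\<forall>t\<in>I. g t = 0) \<longrightarrow> (\<forall>t. g t = 0)"
    and H: "gd h" and eta: "\<eta> > 0"
  shows "\<exists>s\<in>I. h (r + s) \<le> \<eta>"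
proof (rule ccontr)
  assume "\<not> ?thesis"
  then have big: "\<forall>s\<in>I. h (r+s) > \<eta>" by auto
  define \<phi> where "\<phi> s = min (h (r+s)) \<eta> - \<eta>" for s
  have hc: "continuous_on UNIV h" by (rule uniformly_continuous_imp_continuous[OF gd_ucont[OF H]])
  have hc2: "continuous_on UNIV (\<lambda>s. h (r+s))"
  proof -
    have "continuous_on UNIV (\<lambda>s::real^'n. r + s)" by (intro continuous_intros)
    then show ?thesis using continuous_on_compose2[OF hc] by blast
  qed
  have ap: "bohr_ap_on UNIV \<phi>"
    unfolding bohr_ap_on_def
  proof (intro conjI allI impI)
    show "continuous_on UNIV \<phi>" unfolding \<phi>_def by (intro continuous_intros hc2)
    fix \<epsilon> :: real assume e: "\<epsilon> > 0"
    obtain l where l: "l > 0" "\<forall>t0. \<exists>\<tau>. norm (\<tau> - t0) \<le> l \<and> h \<tau> \<le> \<epsilon>"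
      using gd_D(6)[OF H e] by blast
    have "\<forall>t0\<in>UNIV. \<exists>\<tau>\<in>UNIV. norm (\<tau> - t0) \<le> l \<and> (\<forall>t\<in>UNIV. norm (\<phi> (t + \<tau>) - \<phi> t) \<le> \<epsilon>)"
    proof
      fix t0 :: "real^'n"
      obtain \<tau> where t: "norm (\<tau> - t0) \<le> l" "h \<tau> \<le> \<epsilon>" using l(2) by blast
      have "norm (\<phi> (t + \<tau>) - \<phi> t) \<le> \<epsilon>" for t
      proof -
        have "norm (\<phi> (t + \<tau>) - \<phi> t) = \<bar>min (h (r+(t+\<tau>))) \<eta> - min (h (r+t)) \<eta>\<bar>"
          unfolding \<phi>_def by simp
        also have "\<dots> \<le> \<bar>h (r+(t+\<tau>)) - h (r+t)\<bar>" by (rule min_lip)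
        also have "\<dots> \<le> h ((r+(t+\<tau>)) - (r+t))" by (rule gd_diff[OF H])
        also have "(r+(t+\<tau>)) - (r+t) = \<tau>" by simp
        finally show ?thesis using t(2) by simp
      qed
      then show "\<exists>\<tau>\<in>UNIV. norm (\<tau> - t0) \<le> l \<and> (\<forall>t\<in>UNIV. norm (\<phi> (t + \<tau>) - \<phi> t) \<le> \<epsilon>)"
        using t(1) by blast
    qed
    then show "\<exists>l>0. \<forall>t0\<in>UNIV. \<exists>\<tau>\<in>UNIV. norm (\<tau> - t0) \<le> l \<and> (\<forall>t\<in>UNIV. norm (\<phi> (t + \<tau>) - \<phi> t) \<le> \<epsilon>)"
      using l(1) by blast
  qed
  have "\<forall>t\<in>I. \<phi> t = 0"
  proof
    fix t assume "t \<in> I"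
    then have "h (r+t) > \<eta>" using big by blast
    then show "\<phi> t = 0" unfolding \<phi>_def by simp
  qed
  then have "\<forall>t. \<phi> t = 0" using U ap by blast
  then have "\<phi> (-r) = 0" by blast
  moreover have "\<phi> (-r) = - \<eta>" unfolding \<phi>_def using gd_D(1)[OF H] eta by simp
  ultimately show False using eta by simp
qed

lemma gd_restrict:
  fixes h :: "real^'n \<Rightarrow> real" and I :: "(real^'n) set"
  assumes semi: "\<forall>x\<in>I. \<forall>y\<in>I. x+y \<in> I" and H: "gd h"
    and dens: "\<And>r \<eta>. \<eta> > 0 \<Longrightarrow> \<exists>s\<in>I. h (r+s) \<le> \<eta>" and eta: "\<eta> > 0"
  shows "\<exists>L>0. \<forall>t0\<in>I. \<exists>\<tau>\<in>I. norm (\<tau> - t0) \<le> L \<and> h \<tau> \<le> \<eta>"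
proof -
  define e where "e = \<eta>/3"
  have e: "e > 0" using eta by (simp add: e_def)
  obtain l where l: "l > 0" "\<forall>t0. \<exists>\<tau>. norm (\<tau> - t0) \<le> l \<and> h \<tau> \<le> e"
    using gd_D(6)[OF H e] by blast
  obtain \<delta> where dl: "\<delta> > 0" "\<forall>x. norm x < \<delta> \<longrightarrow> h x \<le> e"
    using gd_D(5)[OF H e] by blast
  have cov: "cball (0::real^'n) l \<subseteq> (\<Union>r\<in>UNIV. ball r \<delta>)"
  proof
    fix x :: "real^'n" assume "x \<in> cball 0 l"
    show "x \<in> (\<Union>r\<in>UNIV. ball r \<delta>)" using dl(1) by (intro UN_I[of x]) auto
  qed
  have "\<exists>R. finite R \<and> cball (0::real^'n) l \<subseteq> (\<Union>r\<in>R. ball r \<delta>)"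
  proof (rule compactE_image[OF compact_cball _ cov])
    show "\<And>T. T \<in> UNIV \<Longrightarrow> open (ball T \<delta>)" by simp
    fix C' assume "C' \<subseteq> UNIV" "finite C'" "cball (0::real^'n) l \<subseteq> (\<Union>c\<in>C'. ball c \<delta>)"
    then show "\<exists>R. finite R \<and> cball (0::real^'n) l \<subseteq> (\<Union>r\<in>R. ball r \<delta>)" by (intro exI[of _ C'] conjI)
  qed
  then obtain R where R: "finite R" "cball (0::real^'n) l \<subseteq> (\<Union>r\<in>R. ball r \<delta>)" by blast
  obtain s where s: "\<And>r. s r \<in> I \<and> h (r + s r) \<le> e" using dens[OF e] by metis
  define L where "L = (\<Sum>r\<in>R. norm (s r)) + 1"
  have Ls: "norm (s r) < L" if "r \<in> R" for r
  proof -
    have "norm (s r) \<le> (\<Sum>r\<in>R. norm (s r))" using R(1) that by (intro member_le_sum) auto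
    then show ?thesis unfolding L_def by simp
  qed
  have L0: "L > 0" unfolding L_def by (simp add: sum_nonneg add_nonneg_pos)
  have "\<forall>t0\<in>I. \<exists>\<tau>\<in>I. norm (\<tau> - t0) \<le> L \<and> h \<tau> \<le> \<eta>"
  proof
    fix t0 assume t0: "t0 \<in> I"
    obtain e0 where e0: "norm (e0 - t0) \<le> l" "h e0 \<le> e" using l(2) by blast
    define r' where "r' = t0 - e0"
    have "r' \<in> cball 0 l" unfolding r'_def using e0(1) by (simp add: norm_minus_commute)
    then obtain r where r: "r \<in> R" "r' \<in> ball r \<delta>" using R(2) by blast
    have rr: "norm (r' - r) < \<delta>" using r(2) by (simp add: dist_norm norm_minus_commute)
    define \<tau> where "\<tau> = t0 + s r"
    have tI: "\<tau> \<in> I" unfolding \<tau>_def using semi t0 s by blast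
    have teq: "\<tau> = (e0 + (r + s r)) + (r' - r)" unfolding \<tau>_def r'_def by (simp add: algebra_simps)
    have "h \<tau> \<le> h (e0 + (r + s r)) + h (r' - r)" unfolding teq by (rule gd_D(4)[OF H])
    also have "\<dots> \<le> h e0 + h (r + s r) + h (r' - r)" using gd_D(4)[OF H, of e0 "r + s r"] by linarith
    finally have "h \<tau> \<le> \<eta>" using e0(2) s[of r] dl(2) rr unfolding e_def by fastforce
    moreover have "norm (\<tau> - t0) \<le> L" unfolding \<tau>_def using Ls[OF r(1)] by simp
    ultimately show "\<exists>\<tau>\<in>I. norm (\<tau> - t0) \<le> L \<and> h \<tau> \<le> \<eta>" using tI by blast
  qed
  then show ?thesis using L0 by blast
qed

lemma ap_tb:
  fixes f :: "real^'n \<Rightarrow> 'v::real_normed_vector"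
  assumes ap: "bohr_ap_on UNIV f" and e: "e > 0"
  shows "\<exists>k. finite k \<and> range f \<subseteq> (\<Union>c\<in>k. ball c e)"
proof -
  have cont: "continuous_on UNIV f" and per: "\<forall>\<epsilon>>0. \<exists>l>0. \<forall>t0. \<exists>\<tau>. norm (\<tau> - t0) \<le> l \<and> (\<forall>t. norm (f (t+\<tau>) - f t) \<le> \<epsilon>)"
    using ap unfolding bohr_ap_on_def by auto
  have e2: "e/2 > 0" using e by simp
  obtain l where l: "l > 0" "\<forall>t0. \<exists>\<tau>. norm (\<tau> - t0) \<le> l \<and> (\<forall>t. norm (f (t+\<tau>) - f t) \<le> e/2)"
    using per e2 by blast
  define K where "K = f ` cball 0 l"
  have cK: "compact K" unfolding K_def
    by (rule compact_continuous_image[OF continuous_on_subset[OF cont] compact_cball]) simp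
  have cov2: "K \<subseteq> (\<Union>c\<in>K. ball c (e/2))"
  proof
    fix x assume "x \<in> K"
    then show "x \<in> (\<Union>c\<in>K. ball c (e/2))" using e2 by (intro UN_I[of x]) auto
  qed
  have "\<exists>k. k \<subseteq> K \<and> finite k \<and> K \<subseteq> (\<Union>c\<in>k. ball c (e/2))"
  proof (rule compactE_image[OF cK _ cov2])
    show "\<And>T. T \<in> K \<Longrightarrow> open (ball T (e/2))" by simp
    fix C' assume "C' \<subseteq> K" "finite C'" "K \<subseteq> (\<Union>c\<in>C'. ball c (e/2))"
    then show "\<exists>k. k \<subseteq> K \<and> finite k \<and> K \<subseteq> (\<Union>c\<in>k. ball c (e/2))" by (intro exI[of _ C'] conjI)
  qed
  then obtain k where k: "k \<subseteq> K" "finite k" "K \<subseteq> (\<Union>c\<in>k. ball c (e/2))" by blast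
  show ?thesis
  proof (intro exI[of _ k] conjI subsetI)
    show "finite k" by (rule k(2))
    fix y assume "y \<in> range f"
    then obtain u where u: "y = f u" by blast
    obtain \<tau> where t: "norm (\<tau> - (-u)) \<le> l" "\<forall>t. norm (f (t+\<tau>) - f t) \<le> e/2" using l(2) by blast
    have "u + \<tau> \<in> cball 0 l" using t(1) by (simp add: add.commute)
    then have "f (u + \<tau>) \<in> K" unfolding K_def by blast
    then have "f (u + \<tau>) \<in> (\<Union>c\<in>k. ball c (e/2))" using k(3) by (rule subsetD[rotated])
    then obtain c where c0: "c \<in> k" "f (u + \<tau>) \<in> ball c (e/2)" by (rule UN_E)
    then have c: "c \<in> k" "dist c (f (u + \<tau>)) < e/2" by simp_all
    have "dist (f (u + \<tau>)) (f u) \<le> e/2" using t(2) by (simp add: dist_norm)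
    then have "dist c (f u) < e" using c(2) dist_triangle[of c "f u" "f (u+\<tau>)"] by linarith
    then show "y \<in> (\<Union>c\<in>k. ball c e)" using c(1) u by auto
  qed
qed

lemma adm_ext:
  fixes H :: "real^'n \<Rightarrow> 'v::banach"
  assumes a: "ap_admissible_for TYPE('v) I" and b: "uniformly_continuous_on I H" and c: "bohr_ap_on I H"
  shows "\<exists>Ht. bohr_ap_on UNIV Ht \<and> (\<forall>t\<in>I. Ht t = H t)"
proof -
  from a have "\<forall>H::real^'n \<Rightarrow> 'v. uniformly_continuous_on I H \<and> bohr_ap_on I H \<longrightarrow>
        (\<exists>!Ht. bohr_ap_on UNIV Ht \<and> (\<forall>t\<in>I. Ht t = H t))"
    unfolding ap_admissible_for_def by (elim conjE)
  from this[rule_format, OF conjI[OF b c]] show ?thesis by (rule ex1_implies_ex)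
qed

lemma adm_semi:
  assumes a: "ap_admissible_for TYPE('v::banach) (I::(real^'n) set)"
  shows "\<forall>x\<in>I. \<forall>y\<in>I. x + y \<in> I"
  using a unfolding ap_admissible_for_def by (elim conjE)

lemma B_ap_D:
  assumes "bohr_B_ap_on I BB G" "B \<in> BB" "\<epsilon> > 0"
  shows "\<exists>l>0. \<forall>t0\<in>I. \<exists>\<tau>\<in>I. norm (\<tau> - t0) \<le> l \<and> (\<forall>t\<in>I. \<forall>y\<in>B. norm (G (t + \<tau>, y) - G (t, y)) \<le> \<epsilon>)"
proof -
  from assms(1) have "\<forall>B\<in>BB. \<forall>\<epsilon>>0. \<exists>l>0. \<forall>t0\<in>I. \<exists>\<tau>\<in>I. norm (\<tau> - t0) \<le> l \<and>
        (\<forall>t\<in>I. \<forall>y\<in>B. norm (G (t + \<tau>, y) - G (t, y)) \<le> \<epsilon>)"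
    unfolding bohr_B_ap_on_def by (elim conjE)
  from this[rule_format, OF assms(2) assms(3)] show ?thesis .
qed

theorem theorem2p50:
  fixes I :: "(real^'n) set"
    and BB :: "'y::banach set set"
    and F :: "real^'n \<Rightarrow> 'y"
    and G :: "(real^'n) \<times> 'y \<Rightarrow> 'z::banach"
    and B :: "'y set"
  assumes BB_ne: "\<forall>B'\<in>BB. B' \<noteq> {}"
    and adm_Y: "ap_admissible_for TYPE('y) I"
    and adm_Z: "ap_admissible_for TYPE('z) I"
    and adm_YZ: "ap_admissible_for TYPE('y \<times> 'z) I"
    and adm_YC: "ap_admissible_for TYPE('y \<times> ('y \<Rightarrow>\<^sub>C 'z)) I"
    and F_uc: "uniformly_continuous_on I F"
    and F_ap: "bohr_ap_on I F"
    and G_ap: "bohr_B_ap_on I BB G"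
    and B_def: "closure (F ` I) = B"
    and B_in: "B \<in> BB"
    and G_uc: "uniformly_continuous_on (I \<times> B) G"
  shows "uniformly_continuous_on I (\<lambda>t. G (t, F t)) \<and> bohr_ap_on I (\<lambda>t. G (t, F t))"
proof -
  have semi: "\<forall>x\<in>I. \<forall>y\<in>I. x + y \<in> I" by (rule adm_semi[OF adm_Y])
  have FIB: "F ` I \<subseteq> B" using B_def closure_subset by blast
  have ucW: "uniformly_continuous_on I (\<lambda>t. G (t, F t))"
  proof -
    have "uniformly_continuous_on I (\<lambda>t. (t, F t))"
      unfolding uniformly_continuous_on_def
    proof (intro allI impI)
      fix e :: real assume e: "e > 0"
      then have "e/2 > 0" by simp
      then obtain d where d: "d > 0" "\<forall>x\<in>I. \<forall>x'\<in>I. dist x' x < d \<longrightarrow> dist (F x') (F x) < e/2"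
        using F_uc unfolding uniformly_continuous_on_def by blast
      show "\<exists>d>0. \<forall>x\<in>I. \<forall>x'\<in>I. dist x' x < d \<longrightarrow> dist (x', F x') (x, F x) < e"
      proof (intro exI[of _ "min d (e/2)"] conjI ballI impI)
        show "min d (e/2) > 0" using d e by simp
        fix x x' assume x: "x \<in> I" "x' \<in> I" and dx: "dist x' x < min d (e/2)"
        have "dist (x', F x') (x, F x) \<le> dist x' x + dist (F x') (F x)"
          unfolding dist_Pair_Pair by (rule sqrt_sum_squares_le_sum) auto
        moreover have "dist (F x') (F x) < e/2" using d(2) x dx by auto
        ultimately show "dist (x', F x') (x, F x) < e" using dx by linarith
      qed
    qed
    moreover have "uniformly_continuous_on ((\<lambda>t. (t, F t)) ` I) G"
      by (rule uc_subset[OF G_uc]) (use FIB in auto)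
    ultimately show ?thesis using uniformly_continuous_on_compose[of I "\<lambda>t. (t, F t)" G] by simp
  qed
  have apW: "\<forall>\<epsilon>>0. \<exists>l>0. \<forall>t0\<in>I. \<exists>\<tau>\<in>I. norm (\<tau> - t0) \<le> l \<and> (\<forall>t\<in>I. norm (G (t+\<tau>, F (t+\<tau>)) - G (t, F t)) \<le> \<epsilon>)"
  proof (cases "\<exists>v::'z. v \<noteq> 0")
    case False
    then have z0: "\<And>z::'z. z = 0" by blast
    have nz: "\<And>x::'z. norm x = 0" using z0 by simp
    show ?thesis
    proof (intro allI impI)
      fix \<epsilon> :: real assume e: "\<epsilon> > 0"
      have "\<forall>t0\<in>I. norm (t0 - t0) \<le> 1 \<and> (\<forall>t\<in>I. norm (G (t+t0, F (t+t0)) - G (t, F t)) \<le> \<epsilon>)"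
        using e by (simp add: nz)
      then show "\<exists>l>0. \<forall>t0\<in>I. \<exists>\<tau>\<in>I. norm (\<tau> - t0) \<le> l \<and> (\<forall>t\<in>I. norm (G (t+\<tau>, F (t+\<tau>)) - G (t, F t)) \<le> \<epsilon>)"
        using zero_less_one by blast
    qed
  next
    case True
    then obtain v :: 'z where v: "v \<noteq> 0" by blast
    have U: "\<And>g t. bohr_ap_on UNIV g \<Longrightarrow> (\<forall>t\<in>I. g t = 0) \<Longrightarrow> (g t::real) = 0"
      using adm_unique_real[OF adm_Z v] by blast
    show ?thesis
    proof (intro allI impI)
      fix \<epsilon> :: real assume e: "\<epsilon> > 0"
      then have e4: "\<epsilon>/4 > 0" by simp
      then obtain \<delta> where dl: "\<delta> > 0" "\<forall>a\<in>I\<times>B. \<forall>b\<in>I\<times>B. dist b a < \<delta> \<longrightarrow> dist (G b) (G a) < \<epsilon>/4"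
        using G_uc unfolding uniformly_continuous_on_def by blast
      obtain Ft where Ft: "bohr_ap_on UNIV Ft" "\<forall>t\<in>I. Ft t = F t"
        using adm_ext[OF adm_Y F_uc F_ap] by blast
      have d2: "\<delta>/2 > 0" using dl(1) by simp
      obtain k where k: "finite k" "range Ft \<subseteq> (\<Union>c\<in>k. ball c (\<delta>/2))"
        using ap_tb[OF Ft(1) d2] by metis
      define K where "K = {c\<in>k. \<exists>y\<in>F`I. dist c y < \<delta>/2}"
      have Kex: "\<exists>y. y \<in> F`I \<and> dist c y < \<delta>/2" if "c \<in> K" for c
        using that unfolding K_def by auto
      define sel where "sel c = (SOME y. y \<in> F`I \<and> dist c y < \<delta>/2)" for c
      define Y0 where "Y0 = sel ` K"
      have sel: "sel c \<in> F`I \<and> dist c (sel c) < \<delta>/2" if "c \<in> K" for c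
        unfolding sel_def by (rule someI_ex[OF Kex[OF that]])
      have "K \<subseteq> k" unfolding K_def by auto
      then have "finite K" using k(1) finite_subset by blast
      then have Y0fin: "finite Y0" unfolding Y0_def by simp
      have Y0B: "Y0 \<subseteq> B"
      proof
        fix y assume "y \<in> Y0"
        then obtain c where "c \<in> K" "y = sel c" unfolding Y0_def by auto
        then show "y \<in> B" using sel FIB by auto
      qed
      have Y0net: "\<exists>y\<in>Y0. dist y (F t) < \<delta>" if t: "t \<in> I" for t
      proof -
        have "Ft t = F t" using Ft(2) t by blast
        then have "F t \<in> range Ft" using rangeI[of Ft t] by simp
        then have "F t \<in> (\<Union>c\<in>k. ball c (\<delta>/2))" by (rule subsetD[OF k(2)])
        then obtain c where c0: "c \<in> k" "F t \<in> ball c (\<delta>/2)" by (rule UN_E)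
        then have c: "c \<in> k" "dist c (F t) < \<delta>/2" by simp_all
        have "F t \<in> F`I" using t by simp
        then have "c \<in> K" unfolding K_def using c by blast
        then have s: "sel c \<in> Y0" "dist c (sel c) < \<delta>/2" using sel unfolding Y0_def by auto
        have "dist (sel c) (F t) \<le> dist (sel c) c + dist c (F t)" by (rule dist_triangle)
        moreover have "dist (sel c) c = dist c (sel c)" by (rule dist_commute)
        ultimately have "dist (sel c) (F t) < \<delta>" using s(2) c(2) by linarith
        then show ?thesis using s(1) by blast
      qed
      have Gex: "\<forall>y\<in>B. \<exists>g. bohr_ap_on UNIV g \<and> (\<forall>t\<in>I. g t = G (t, y))"
      proof
        fix y assume y: "y \<in> B"
        have uc: "uniformly_continuous_on I (\<lambda>t. G (t, y))"
        proof -
          have "uniformly_continuous_on I (\<lambda>t. (t, y))"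
            unfolding uniformly_continuous_on_def
          proof (intro allI impI)
            fix e :: real assume "e > 0"
            then show "\<exists>d>0. \<forall>x\<in>I. \<forall>x'\<in>I. dist x' x < d \<longrightarrow> dist (x', y) (x, y) < e"
              by (intro exI[of _ e]) (simp add: dist_Pair_Pair)
          qed
          moreover have "uniformly_continuous_on ((\<lambda>t. (t, y)) ` I) G"
            by (rule uc_subset[OF G_uc]) (use y in auto)
          ultimately show ?thesis using uniformly_continuous_on_compose[of I "\<lambda>t. (t, y)" G] by simp
        qed
        have ap: "bohr_ap_on I (\<lambda>t. G (t, y))"
          unfolding bohr_ap_on_def
        proof (intro conjI allI impI)
          show "continuous_on I (\<lambda>t. G (t, y))" by (rule uniformly_continuous_imp_continuous[OF uc])
          fix \<epsilon>' :: real assume e': "\<epsilon>' > 0"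
          obtain l where l: "l > 0" "\<forall>t0\<in>I. \<exists>\<tau>\<in>I. norm (\<tau> - t0) \<le> l \<and> (\<forall>t\<in>I. \<forall>y\<in>B. norm (G (t + \<tau>, y) - G (t, y)) \<le> \<epsilon>')"
            using B_ap_D[OF G_ap B_in e'] by blast
          show "\<exists>l>0. \<forall>t0\<in>I. \<exists>\<tau>\<in>I. norm (\<tau> - t0) \<le> l \<and> (\<forall>t\<in>I. norm (G (t + \<tau>, y) - G (t, y)) \<le> \<epsilon>')"
            using l y by blast
        qed
        show "\<exists>g. bohr_ap_on UNIV g \<and> (\<forall>t\<in>I. g t = G (t, y))"
          by (rule adm_ext[OF adm_Z uc ap])
      qed
      then obtain Gt where Gt: "\<And>y. y \<in> B \<Longrightarrow> bohr_ap_on UNIV (Gt y) \<and> (\<forall>t\<in>I. Gt y t = G (t, y))"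
        by metis
      define h where "h x = dfc Ft x + (\<Sum>y\<in>Y0. dfc (Gt y) x)" for x
      have "\<forall>y\<in>Y0. gd (dfc (Gt y))" using Gt Y0B dfc_gd by blast
      then have gh: "gd h" unfolding h_def
        by (intro gd_add dfc_gd[OF Ft(1)] gd_sum[OF Y0fin])
      have dens: "\<And>r \<eta>. \<eta> > 0 \<Longrightarrow> \<exists>s\<in>I. h (r+s) \<le> \<eta>"
      proof -
        have U': "\<forall>g::real^'n \<Rightarrow> real. bohr_ap_on UNIV g \<and> (\<forall>t\<in>I. g t = 0) \<longrightarrow> (\<forall>t. g t = 0)"
          using U by blast
        fix r :: "real^'n" and \<eta> :: real assume "\<eta> > 0"
        then show "\<exists>s\<in>I. h (r+s) \<le> \<eta>" by (rule gd_density[OF U' gh])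
      qed
      define \<eta> where "\<eta> = min (1/2) (min (\<delta>/2) (\<epsilon>/4))"
      have eta: "\<eta> > 0" "\<eta> < 1" "\<eta> < \<delta>" "\<eta> \<le> \<epsilon>/4" using dl(1) e by (auto simp: \<eta>_def)
      obtain L where L: "L > 0" "\<forall>t0\<in>I. \<exists>\<tau>\<in>I. norm (\<tau> - t0) \<le> L \<and> h \<tau> \<le> \<eta>"
        using gd_restrict[OF semi gh dens eta(1)] by blast
      show "\<exists>l>0. \<forall>t0\<in>I. \<exists>\<tau>\<in>I. norm (\<tau> - t0) \<le> l \<and> (\<forall>t\<in>I. norm (G (t+\<tau>, F (t+\<tau>)) - G (t, F t)) \<le> \<epsilon>)"
      proof -
       have "\<forall>t0\<in>I. \<exists>\<tau>\<in>I. norm (\<tau> - t0) \<le> L \<and> (\<forall>t\<in>I. norm (G (t+\<tau>, F (t+\<tau>)) - G (t, F t)) \<le> \<epsilon>)"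
       proof
        fix t0 assume t0: "t0 \<in> I"
        obtain \<tau> where tau: "\<tau> \<in> I" "norm (\<tau> - t0) \<le> L" "h \<tau> \<le> \<eta>" using L(2) t0 by blast
        have sumnn: "0 \<le> (\<Sum>y\<in>Y0. dfc (Gt y) \<tau>)" by (simp add: sum_nonneg dfc_nonneg)
        have dF: "dfc Ft \<tau> \<le> \<eta>" using tau(3) sumnn unfolding h_def by linarith
        have dG: "dfc (Gt y) \<tau> \<le> \<eta>" if "y \<in> Y0" for y
        proof -
          have "dfc (Gt y) \<tau> \<le> (\<Sum>y\<in>Y0. dfc (Gt y) \<tau>)"
            using Y0fin that by (intro member_le_sum) (auto simp: dfc_nonneg)
          then show ?thesis using tau(3) dfc_nonneg[of Ft \<tau>] unfolding h_def by linarith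
        qed
        have "\<forall>t\<in>I. norm (G (t+\<tau>, F (t+\<tau>)) - G (t, F t)) \<le> \<epsilon>"
        proof
          fix t assume t: "t \<in> I"
          have tt: "t + \<tau> \<in> I" using semi t tau(1) by blast
          obtain y where y: "y \<in> Y0" "dist y (F t) < \<delta>" using Y0net[OF t] by blast
          have yB: "y \<in> B" using y(1) Y0B by blast
          have FB: "F t \<in> B" "F (t+\<tau>) \<in> B" using FIB t tt by auto
          have nF: "norm (F (t+\<tau>) - F t) \<le> \<eta>"
            using dfc_small[OF dF eta(2), of t] Ft(2) t tt by simp
          have nG: "norm (G (t+\<tau>, y) - G (t, y)) \<le> \<eta>"
            using dfc_small[OF dG[OF y(1)] eta(2), of t] Gt[OF yB] t tt by simp
          have a1: "norm (G (t+\<tau>, F (t+\<tau>)) - G (t+\<tau>, F t)) < \<epsilon>/4"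
          proof -
            have "dist (t+\<tau>, F (t+\<tau>)) (t+\<tau>, F t) < \<delta>" using nF eta(3) by (simp add: dist_Pair_Pair dist_norm)
            then have "dist (G (t+\<tau>, F (t+\<tau>))) (G (t+\<tau>, F t)) < \<epsilon>/4"
              using dl(2) tt FB by blast
            then show ?thesis by (simp add: dist_norm)
          qed
          have a2: "norm (G (t+\<tau>, F t) - G (t+\<tau>, y)) < \<epsilon>/4"
          proof -
            have "dist (t+\<tau>, F t) (t+\<tau>, y) < \<delta>" using y(2) by (simp add: dist_Pair_Pair dist_commute)
            then have "dist (G (t+\<tau>, F t)) (G (t+\<tau>, y)) < \<epsilon>/4"
              using dl(2) tt FB yB by blast
            then show ?thesis by (simp add: dist_norm)
          qed
          have a4: "norm (G (t, y) - G (t, F t)) < \<epsilon>/4"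
          proof -
            have "dist (t, y) (t, F t) < \<delta>" using y(2) by (simp add: dist_Pair_Pair)
            then have "dist (G (t, y)) (G (t, F t)) < \<epsilon>/4"
              using dl(2) t FB yB by blast
            then show ?thesis by (simp add: dist_norm)
          qed
          have "norm (G (t+\<tau>, F (t+\<tau>)) - G (t, F t)) \<le> norm (G (t+\<tau>, F (t+\<tau>)) - G (t+\<tau>, F t)) + norm (G (t+\<tau>, F t) - G (t+\<tau>, y)) + norm (G (t+\<tau>, y) - G (t, y)) + norm (G (t, y) - G (t, F t))"
            using norm4[of "G (t+\<tau>, F (t+\<tau>)) - G (t+\<tau>, F t)" "G (t+\<tau>, F t) - G (t+\<tau>, y)" "G (t+\<tau>, y) - G (t, y)" "G (t, y) - G (t, F t)"]
            by simp
          then show "norm (G (t+\<tau>, F (t+\<tau>)) - G (t, F t)) \<le> \<epsilon>"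
            using a1 a2 a4 nG eta(4) by linarith
        qed
        then show "\<exists>\<tau>\<in>I. norm (\<tau> - t0) \<le> L \<and> (\<forall>t\<in>I. norm (G (t+\<tau>, F (t+\<tau>)) - G (t, F t)) \<le> \<epsilon>)"
          using tau by blast
       qed
       then show ?thesis using L(1) by blast
      qed
    qed
  qed
  show ?thesis
    using ucW apW uniformly_continuous_imp_continuous[OF ucW] unfolding bohr_ap_on_def by blast
qed

end
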